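(* Let $A\in\mathbb Z^{d\times n}$ with $\ker(A)\cap\mathbb N^n=\{0\}$. Suppose $b\in\ker(A)$ reduces the distance of a nonzero $x\in\ker(A)$, and $z\in\ker(A)$ has a conformal decomposition $z=x+y$ with $y\in\ker(A)$. Then $b$ reduces the distance of $z$.
   Context: For $z\in\mathbb Z^n$, $z^\pm\in\mathbb N^n$ are the unique vectors with disjoint supports and $z=z^+-z^-$; $\|\cdot\|$ is the $1$-norm. $z=x+y$ is a conformal decomposition if $z^+=x^++y^+$ and $z^-=x^-+y^-$. For nonzero $w\in\ker(A)$, $b\in\ker(A)$ reduces the distance of $w$ if there exist $(p,q)\in\{(w^+,w^-),(w^-,w^+)\}$ and $\varepsilon\in\{\pm1\}$ with $p+\varepsilon b\in\mathbb N^n$ and $\|p+\varepsilon b-q\|<\|w\|$. *)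

theory Defs
  imports "HOL-Analysis.Analysis"
begin

definition kerA :: "int ^ 'n ^ 'd \<Rightarrow> (int ^ 'n) set" where
  "kerA A = {x. A *v x = 0}"

definition natvec :: "int ^ 'n \<Rightarrow> bool" where
  "natvec x \<longleftrightarrow> (\<forall>i. x $ i \<ge> 0)"

definition pos_part :: "int ^ 'n \<Rightarrow> int ^ 'n" where
  "pos_part z = (\<chi> i. max (z $ i) 0)"

definition neg_part :: "int ^ 'n \<Rightarrow> int ^ 'n" where
  "neg_part z = (\<chi> i. max (- (z $ i)) 0)"

definition norm1 :: "int ^ 'n \<Rightarrow> int" where
  "norm1 z = (\<Sum>i\<in>UNIV. \<bar>z $ i\<bar>)"

definition conformal_decomp :: "int ^ 'n \<Rightarrow> int ^ 'n \<Rightarrow> int ^ 'n \<Rightarrow> bool" where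
  "conformal_decomp z x y \<longleftrightarrow> z = x + y \<and>
     pos_part z = pos_part x + pos_part y \<and> neg_part z = neg_part x + neg_part y"

definition reduces_distance :: "int ^ 'n ^ 'd \<Rightarrow> int ^ 'n \<Rightarrow> int ^ 'n \<Rightarrow> bool" where
  "reduces_distance A b w \<longleftrightarrow> w \<in> kerA A \<and> w \<noteq> 0 \<and> b \<in> kerA A \<and>
     (\<exists>(p, q) \<in> {(pos_part w, neg_part w), (neg_part w, pos_part w)}.
        \<exists>\<epsilon> \<in> {1, -1::int}. natvec (p + \<epsilon> *s b) \<and> norm1 (p + \<epsilon> *s b - q) < norm1 w)"

end

theory Submission
  imports Defs
begin

lemma norm1_tri: "norm1 (u + v) \<le> norm1 u + norm1 v"
  unfolding norm1_def by (simp add: sum.distrib[symmetric] sum_mono abs_triangle_ineq)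

lemma norm1_uminus: "norm1 (- u) = norm1 u"
  unfolding norm1_def by simp

lemma natvec_pos: "natvec (pos_part u)" "natvec (neg_part u)"
  unfolding natvec_def pos_part_def neg_part_def by auto

lemma natvec_add: "natvec u \<Longrightarrow> natvec v \<Longrightarrow> natvec (u + v)"
  unfolding natvec_def by simp

lemma pos_neg_diff: "pos_part u - neg_part u = u"
  unfolding pos_part_def neg_part_def by (simp add: vec_eq_iff max_def)

lemma conf_norm:
  assumes "conformal_decomp z x y"
  shows "norm1 z = norm1 x + norm1 y"
proof -
  have a: "\<bar>w $ i\<bar> = pos_part w $ i + neg_part w $ i" for w :: "int ^ 'n" and i
    unfolding pos_part_def neg_part_def by auto
  have "\<bar>z $ i\<bar> = \<bar>x $ i\<bar> + \<bar>y $ i\<bar>" for i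
  proof -
    have "pos_part z $ i = pos_part x $ i + pos_part y $ i" "neg_part z $ i = neg_part x $ i + neg_part y $ i"
      using assms unfolding conformal_decomp_def by auto
    then show ?thesis using a[of z i] a[of x i] a[of y i] by simp
  qed
  then show ?thesis unfolding norm1_def by (simp add: sum.distrib)
qed

lemma key:
  fixes p q py qy b x y z :: "int ^ 'n"
  assumes "natvec (p + e *s b)" "natvec py"
    "norm1 (p + e *s b - q) < norm1 x" "norm1 (py - qy) = norm1 y"
    "norm1 z = norm1 x + norm1 y"
  shows "natvec ((p + py) + e *s b) \<and> norm1 ((p + py) + e *s b - (q + qy)) < norm1 z"
proof
  show "natvec ((p + py) + e *s b)"
    using natvec_add[OF assms(1,2)] by (simp add: algebra_simps)
  have eq: "(p + py) + e *s b - (q + qy) = (p + e *s b - q) + (py - qy)" by (simp add: algebra_simps)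
  show "norm1 ((p + py) + e *s b - (q + qy)) < norm1 z"
    unfolding eq using norm1_tri[of "p + e *s b - q" "py - qy"] assms(3,4,5) by linarith
qed

theorem lemma7p7:
  fixes A :: "int ^ 'n ^ 'd" and b x y z :: "int ^ 'n"
  assumes "\<forall>v. v \<in> kerA A \<and> natvec v \<longrightarrow> v = 0"
    and "x \<in> kerA A" and "x \<noteq> 0"
    and "reduces_distance A b x"
    and "z \<in> kerA A" and "y \<in> kerA A"
    and "conformal_decomp z x y"
  shows "reduces_distance A b z"
proof -
  have cd: "pos_part z = pos_part x + pos_part y" "neg_part z = neg_part x + neg_part y"
    using assms(7) unfolding conformal_decomp_def by auto
  have nz: "norm1 z = norm1 x + norm1 y" using conf_norm[OF assms(7)] .
  have "norm1 x \<noteq> 0"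
  proof
    assume "norm1 x = 0"
    then have "\<forall>i\<in>UNIV. \<bar>x $ i\<bar> = 0" unfolding norm1_def
      by (subst sum_nonneg_eq_0_iff[symmetric]) auto
    then show False using assms(3) by (simp add: vec_eq_iff)
  qed
  moreover have "norm1 y \<ge> 0" unfolding norm1_def by (simp add: sum_nonneg)
  moreover have "norm1 x \<ge> 0" unfolding norm1_def by (simp add: sum_nonneg)
  ultimately have "norm1 z \<noteq> 0" using nz by simp
  then have z0: "z \<noteq> 0" unfolding norm1_def by auto
  have bk: "b \<in> kerA A" using assms(4) unfolding reduces_distance_def by auto
  have ny1: "norm1 (pos_part y - neg_part y) = norm1 y" by (simp add: pos_neg_diff)
  have ny2: "norm1 (neg_part y - pos_part y) = norm1 y"
    by (metis minus_diff_eq norm1_uminus pos_neg_diff)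
  from assms(4) obtain p q e where pq: "(p, q) \<in> {(pos_part x, neg_part x), (neg_part x, pos_part x)}"
    and e: "e \<in> {1, -1::int}" and h: "natvec (p + e *s b)" "norm1 (p + e *s b - q) < norm1 x"
    unfolding reduces_distance_def by blast
  show ?thesis
  proof (cases "p = pos_part x \<and> q = neg_part x")
    case True
    have "natvec (pos_part z + e *s b) \<and> norm1 (pos_part z + e *s b - neg_part z) < norm1 z"
      using key[OF h(1) natvec_pos(1)[of y] h(2) ny1 nz] True cd by simp
    then show ?thesis unfolding reduces_distance_def using assms(5) z0 bk e by blast
  next
    case False
    then have T: "p = neg_part x \<and> q = pos_part x" using pq by auto
    have "natvec (neg_part z + e *s b) \<and> norm1 (neg_part z + e *s b - pos_part z) < norm1 z"
      using key[OF h(1) natvec_pos(2)[of y] h(2) ny2 nz] T cd by simp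
    then show ?thesis unfolding reduces_distance_def using assms(5) z0 bk e by blast
  qed
qed

end
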